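(* Let $A$ be a commutative ring. The graph $\Gamma(A)$ contains $4$-cliques if and only if the set $\{u\in A^\times\mid 1-u\in A^\times\}$ is non-empty.
   Context: A unimodular row over $A$ is $(a,b)\in A^2$ with $aA+bA=A$. $\Gamma(A)$ is the graph whose vertices are classes of unimodular rows modulo multiplication by units, with $\{[u],[v]\}$ an edge iff the matrix with rows $u,v$ lies in $\mathrm{GL}_2(A)$. A $4$-clique is a set of four distinct pairwise adjacent vertices. *)

theory Defs
  imports Main
begin

definition unimodular :: "'a::comm_ring_1 \<times> 'a \<Rightarrow> bool" where
  "unimodular r \<longleftrightarrow> (\<exists>x y. fst r * x + snd r * y = 1)"

definition unit_equiv :: "('a::comm_ring_1 \<times> 'a) rel" where
  "unit_equiv = {(p :: 'a \<times> 'a, q). unimodular p \<and> unimodular q \<and>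
      (\<exists>u. u dvd 1 \<and> fst q = u * fst p \<and> snd q = u * snd p)}"

definition Gamma_vertices :: "('a::comm_ring_1 \<times> 'a) set set" where
  "Gamma_vertices = {r. unimodular r} // unit_equiv"

definition det2 :: "'a::comm_ring_1 \<times> 'a \<Rightarrow> 'a \<times> 'a \<Rightarrow> 'a" where
  "det2 p q = fst p * snd q - snd p * fst q"

(* Edge {[u],[v]}: the matrix with rows u, v lies in GL_2(A), i.e. its determinant is a unit
   (independent of the chosen representatives). *)
definition Gamma_edge :: "('a::comm_ring_1 \<times> 'a) set \<Rightarrow> ('a \<times> 'a) set \<Rightarrow> bool" where
  "Gamma_edge X Y \<longleftrightarrow> X \<in> Gamma_vertices \<and> Y \<in> Gamma_vertices \<and>
      (\<exists>u\<in>X. \<exists>v\<in>Y. (det2 u v) dvd 1)"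

definition Gamma_4clique :: "('a::comm_ring_1 \<times> 'a) set set \<Rightarrow> bool" where
  "Gamma_4clique S \<longleftrightarrow> S \<subseteq> Gamma_vertices \<and> card S = 4 \<and>
      (\<forall>X\<in>S. \<forall>Y\<in>S. X \<noteq> Y \<longrightarrow> Gamma_edge X Y)"

end

theory Submission
  imports Defs
begin

lemma vert_rep:
  assumes "X \<in> (Gamma_vertices :: ('a::comm_ring_1 \<times> 'a) set set)"
  obtains p where "unimodular p" "X = unit_equiv `` {p}"
  using assms unfolding Gamma_vertices_def by (rule quotientE) simp

lemma edge_det:
  fixes p q :: "'a::comm_ring_1 \<times> 'a"
  assumes "Gamma_edge X Y" "X = unit_equiv `` {p}" "Y = unit_equiv `` {q}"
  shows "det2 p q dvd 1"
proof -
  from assms obtain u v where u: "(p,u) \<in> unit_equiv" and v: "(q,v) \<in> unit_equiv"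
    and d: "det2 u v dvd 1" unfolding Gamma_edge_def by auto
  from u obtain c where c: "fst u = c * fst p" "snd u = c * snd p"
    unfolding unit_equiv_def by auto
  from v obtain e where e: "fst v = e * fst q" "snd v = e * snd q"
    unfolding unit_equiv_def by auto
  have "det2 u v = det2 p q * (c * e)"
    unfolding det2_def c e by (simp add: algebra_simps)
  then have "det2 p q dvd det2 u v" by simp
  then show ?thesis using d dvd_trans by blast
qed

lemma unit_mult: "(a::'a::comm_ring_1) dvd 1 \<Longrightarrow> b dvd 1 \<Longrightarrow> a * b dvd 1"
  using mult_dvd_mono[of a 1 b 1] by simp

lemma plucker:
  fixes p1 p2 p3 p4 :: "'a::comm_ring_1 \<times> 'a"
  shows "det2 p1 p2 * det2 p3 p4 = det2 p1 p3 * det2 p2 p4 - det2 p1 p4 * det2 p2 p3"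
proof -
  obtain a b where 1: "p1 = (a,b)" by force
  obtain c d where 2: "p2 = (c,d)" by force
  obtain e f where 3: "p3 = (e,f)" by force
  obtain g h where 4: "p4 = (g,h)" by force
  have "(a*d - b*c)*(e*h-f*g) = (a*f-b*e)*(c*h-d*g) - (a*h-b*g)*(c*f-d*e)" by (simp add: algebra_simps)
  then show ?thesis unfolding 1 2 3 4 det2_def by simp
qed
lemma four_reps_unit:
  fixes p1 p2 p3 p4 :: "'a::comm_ring_1 \<times> 'a"
  assumes "det2 p1 p2 dvd 1" "det2 p3 p4 dvd 1" "det2 p1 p3 dvd 1" "det2 p2 p4 dvd 1"
    "det2 p1 p4 dvd 1" "det2 p2 p3 dvd 1"
  shows "{u :: 'a. u dvd 1 \<and> (1 - u) dvd 1} \<noteq> {}"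
proof -
  have "det2 p1 p3 * det2 p2 p4 dvd 1" by (rule unit_mult[OF assms(3) assms(4)])
  then obtain w where w: "1 = det2 p1 p3 * det2 p2 p4 * w" by (auto simp: dvd_def)
  then have wu: "w dvd 1" by (metis dvd_triv_right)
  define u where "u = det2 p1 p4 * det2 p2 p3 * w"
  have "u dvd 1" unfolding u_def by (rule unit_mult[OF unit_mult[OF assms(5) assms(6)] wu])
  moreover have eq: "1 - u = det2 p1 p2 * det2 p3 p4 * w"
  proof -
    have "1 - u = det2 p1 p3 * det2 p2 p4 * w - det2 p1 p4 * det2 p2 p3 * w"
      unfolding u_def using w by simp
    also have "\<dots> = (det2 p1 p3 * det2 p2 p4 - det2 p1 p4 * det2 p2 p3) * w"
      by (simp only: left_diff_distrib)
    also have "\<dots> = det2 p1 p2 * det2 p3 p4 * w" using plucker[of p1 p2 p3 p4] by simp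
    finally show ?thesis .
  qed
  moreover have "(1 - u) dvd 1" unfolding eq by (rule unit_mult[OF unit_mult[OF assms(1) assms(2)] wu])
  ultimately show ?thesis by blast
qed

lemma unim: "unimodular ((1::'a::comm_ring_1), b)" "unimodular ((0::'a::comm_ring_1), 1)"
proof -
  show "unimodular ((1::'a::comm_ring_1), b)" unfolding unimodular_def
    by (rule exI[of _ 1], rule exI[of _ 0], simp)
  show "unimodular ((0::'a::comm_ring_1), 1)" unfolding unimodular_def
    by (rule exI[of _ 0], rule exI[of _ 1], simp)
qed

lemma cls_vert: "unimodular p \<Longrightarrow> unit_equiv `` {p} \<in> Gamma_vertices"
  unfolding Gamma_vertices_def by (rule quotientI) simp

lemma refl_ue: "unimodular p \<Longrightarrow> (p,p) \<in> unit_equiv"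
  unfolding unit_equiv_def by (auto intro: exI[of _ 1])

lemma cls_eq:
  assumes "unit_equiv `` {p} = unit_equiv `` {q}" "unimodular p"
  shows "\<exists>c. c dvd 1 \<and> fst p = c * fst q \<and> snd p = c * snd q"
proof -
  have "p \<in> unit_equiv `` {q}" using assms refl_ue by blast
  then show ?thesis unfolding unit_equiv_def by auto
qed

lemma mk_edge:
  assumes "unimodular p" "unimodular q" "det2 p q dvd 1"
  shows "Gamma_edge (unit_equiv `` {p}) (unit_equiv `` {q})"
proof -
  have "p \<in> unit_equiv `` {p}" using refl_ue[OF assms(1)] by simp
  moreover have "q \<in> unit_equiv `` {q}" using refl_ue[OF assms(2)] by simp
  ultimately show ?thesis unfolding Gamma_edge_def
    using cls_vert[OF assms(1)] cls_vert[OF assms(2)] assms(3) by blast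
qed

theorem lemma2p9:
  shows "(\<exists>S :: ('a::comm_ring_1 \<times> 'a) set set. Gamma_4clique S) \<longleftrightarrow>
         {u :: 'a. u dvd 1 \<and> (1 - u) dvd 1} \<noteq> {}"
proof
  assume "\<exists>S :: ('a \<times> 'a) set set. Gamma_4clique S"
  then obtain S :: "('a \<times> 'a) set set" where S: "Gamma_4clique S" by blast
  then have c4: "card S = Suc (Suc (Suc (Suc 0)))" and sub: "S \<subseteq> Gamma_vertices"
    and E: "\<And>X Y. X \<in> S \<Longrightarrow> Y \<in> S \<Longrightarrow> X \<noteq> Y \<Longrightarrow> Gamma_edge X Y"
    unfolding Gamma_4clique_def by auto
  from c4 obtain X1 T1 where T1: "S = insert X1 T1" "X1 \<notin> T1" "card T1 = Suc (Suc (Suc 0))"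
    by (metis card_Suc_eq)
  from T1(3) obtain X2 T2 where T2: "T1 = insert X2 T2" "X2 \<notin> T2" "card T2 = Suc (Suc 0)"
    by (metis card_Suc_eq)
  from T2(3) obtain X3 T3 where T3: "T2 = insert X3 T3" "X3 \<notin> T3" "card T3 = Suc 0"
    by (metis card_Suc_eq)
  from T3(3) obtain X4 where T4: "T3 = {X4}"
    by (metis card_1_singletonE One_nat_def)
  have SS: "S = {X1,X2,X3,X4}" using T1 T2 T3 T4 by simp
  have dist: "X1 \<noteq> X2" "X1 \<noteq> X3" "X1 \<noteq> X4" "X2 \<noteq> X3" "X2 \<noteq> X4" "X3 \<noteq> X4"
    using T1 T2 T3 T4 by auto
  have in1: "X1 \<in> S" and in2: "X2 \<in> S" and in3: "X3 \<in> S" and in4: "X4 \<in> S"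
    using SS by auto
  obtain p1 where p1: "X1 = unit_equiv `` {p1}" using sub in1 vert_rep by blast
  obtain p2 where p2: "X2 = unit_equiv `` {p2}" using sub in2 vert_rep by blast
  obtain p3 where p3: "X3 = unit_equiv `` {p3}" using sub in3 vert_rep by blast
  obtain p4 where p4: "X4 = unit_equiv `` {p4}" using sub in4 vert_rep by blast
  have d12: "det2 p1 p2 dvd 1" by (rule edge_det[OF E[OF in1 in2 dist(1)] p1 p2])
  have d13: "det2 p1 p3 dvd 1" by (rule edge_det[OF E[OF in1 in3 dist(2)] p1 p3])
  have d14: "det2 p1 p4 dvd 1" by (rule edge_det[OF E[OF in1 in4 dist(3)] p1 p4])
  have d23: "det2 p2 p3 dvd 1" by (rule edge_det[OF E[OF in2 in3 dist(4)] p2 p3])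
  have d24: "det2 p2 p4 dvd 1" by (rule edge_det[OF E[OF in2 in4 dist(5)] p2 p4])
  have d34: "det2 p3 p4 dvd 1" by (rule edge_det[OF E[OF in3 in4 dist(6)] p3 p4])
  show "{u :: 'a. u dvd 1 \<and> (1 - u) dvd 1} \<noteq> {}"
    by (rule four_reps_unit[OF d12 d34 d13 d24 d14 d23])
next
  assume "{u :: 'a. u dvd 1 \<and> (1 - u) dvd 1} \<noteq> {}"
  then obtain u :: 'a where u: "u dvd 1" "(1 - u) dvd 1" by blast
  have u1: "u \<noteq> 1" using u by auto
  have u0: "u \<noteq> 0" using u by auto
  define A where "A = unit_equiv `` {(1::'a, 0::'a)}"
  define B where "B = unit_equiv `` {(0::'a, 1::'a)}"
  define C where "C = unit_equiv `` {(1::'a, 1::'a)}"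
  define D where "D = unit_equiv `` {(1::'a, u)}"
  have AB: "A \<noteq> B" unfolding A_def B_def using cls_eq[of "(1::'a,0::'a)" "(0,1)"] unim by auto
  have AC: "A \<noteq> C" unfolding A_def C_def using cls_eq[of "(1::'a,0::'a)" "(1,1)"] unim by auto
  have AD: "A \<noteq> D"
  proof
    assume "A = D"
    then obtain c :: 'a where "1 = c * 1" "0 = c * u"
      using cls_eq[of "(1::'a,0::'a)" "(1,u)"] unim unfolding A_def D_def by auto
    then show False using u0 by simp
  qed
  have BC: "B \<noteq> C" unfolding B_def C_def using cls_eq[of "(0::'a,1::'a)" "(1,1)"] unim by auto
  have BD: "B \<noteq> D" unfolding B_def D_def using cls_eq[of "(0::'a,1::'a)" "(1,u)"] unim by auto
  have CD: "C \<noteq> D"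
  proof
    assume "C = D"
    then obtain c :: 'a where "1 = c * 1" "1 = c * u"
      using cls_eq[of "(1::'a,1::'a)" "(1,u)"] unim unfolding C_def D_def by auto
    then show False using u1 by simp
  qed
  have V: "{A,B,C,D} \<subseteq> Gamma_vertices" unfolding A_def B_def C_def D_def
    using cls_vert unim by auto
  have c: "card {A,B,C,D} = 4" using AB AC AD BC BD CD by auto
  have e1: "Gamma_edge A B" unfolding A_def B_def by (rule mk_edge) (auto simp: unim det2_def)
  have e2: "Gamma_edge A C" unfolding A_def C_def by (rule mk_edge) (auto simp: unim det2_def)
  have e3: "Gamma_edge A D" unfolding A_def D_def by (rule mk_edge) (auto simp: unim det2_def u)
  have e4: "Gamma_edge B C" unfolding B_def C_def by (rule mk_edge) (auto simp: unim det2_def)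
  have e5: "Gamma_edge B D" unfolding B_def D_def by (rule mk_edge) (auto simp: unim det2_def)
  have e6: "Gamma_edge C D" unfolding C_def D_def
  proof (rule mk_edge)
    have "u - 1 = - (1 - u)" by simp
    then have "u - 1 dvd 1" using u(2) by (simp only: minus_dvd_iff)
    then show "det2 (1, 1) (1, u) dvd 1" by (simp add: det2_def)
  qed (auto simp: unim)
  have sym: "Gamma_edge X Y \<Longrightarrow> Gamma_edge Y X" for X Y :: "('a \<times> 'a) set"
  proof -
    assume "Gamma_edge X Y"
    then obtain a b where ab: "a \<in> X" "b \<in> Y" "det2 a b dvd 1" and XY: "X \<in> Gamma_vertices" "Y \<in> Gamma_vertices"
      unfolding Gamma_edge_def by auto
    have "det2 b a = - det2 a b" by (simp add: det2_def)
    then have "det2 b a dvd 1" using ab by simp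
    then show "Gamma_edge Y X" unfolding Gamma_edge_def using ab XY by blast
  qed
  have "Gamma_4clique {A,B,C,D}" unfolding Gamma_4clique_def
    using V c e1 e2 e3 e4 e5 e6 sym[OF e1] sym[OF e2] sym[OF e3] sym[OF e4] sym[OF e5] sym[OF e6]
    by simp
  then show "\<exists>S :: ('a \<times> 'a) set set. Gamma_4clique S" by blast
qed

end
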